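(* Let $\omega\ge 3$, $m\ge 0$, $1\le k\le\lfloor(\omega-2)/2\rfloor$, and let $G$ be the group with presentation $$\langle \alpha,\beta\mid (\beta\alpha)^{k}\beta = \{(\beta\alpha)^k\beta^{\omega-2k}[(\beta\alpha)^k\beta\alpha^{-1}(\alpha\beta)^{-k}]^{-\omega+k}\}^m(\alpha\beta)^{k}\alpha\rangle.$$ For any homomorphism $\Phi:G\to\mathrm{Homeo}^+(\mathbb{R})$, if $\Phi(\alpha)(t)>t$ for all $t\in\mathbb{R}$, then $\Phi(\beta)(t)\ge t$ for all $t\in\mathbb{R}$.
   Context: $\mathrm{Homeo}^+(\mathbb{R})$ is the group of order-preserving homeomorphisms of $\mathbb{R}$. (This $G$ is the knot group of the closure of the braid $(\sigma_1\cdots\sigma_{2k})(\sigma_1\cdots\sigma_{\omega-1})^{1+m\omega}$.) *)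

theory Defs
  imports "HOL-Analysis.Analysis"
begin

text \<open>Homeo+(R): order-preserving homeomorphisms of the real line, as a group
  under composition (group product g h corresponds to g \<circ> h).\<close>
definition homeo_plus :: "(real \<Rightarrow> real) set" where
  "homeo_plus = {f. homeomorphism UNIV UNIV f (inv f) \<and> mono f}"

definition ipow :: "(real \<Rightarrow> real) \<Rightarrow> int \<Rightarrow> (real \<Rightarrow> real)" where
  "ipow f n = (if 0 \<le> n then f ^^ nat n else (inv f) ^^ nat (- n))"

text \<open>The defining relation of G, evaluated at images a = Phi(alpha), b = Phi(beta).
  A homomorphism G \<rightarrow> Homeo+(R) is exactly a pair (a,b) in Homeo+(R) satisfying it.\<close>
definition rel_holds :: "nat \<Rightarrow> nat \<Rightarrow> nat \<Rightarrow> (real \<Rightarrow> real) \<Rightarrow> (real \<Rightarrow> real) \<Rightarrow> bool" where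
  "rel_holds \<omega> m k a b \<longleftrightarrow>
     (let Y = ipow (b \<circ> a) (int k) \<circ> b \<circ> ipow a (-1) \<circ> ipow (a \<circ> b) (- int k);
          X = ipow (b \<circ> a) (int k) \<circ> ipow b (int \<omega> - 2 * int k) \<circ> ipow Y (- int \<omega> + int k)
      in ipow (b \<circ> a) (int k) \<circ> b = ipow X (int m) \<circ> ipow (a \<circ> b) (int k) \<circ> a)"

end

theory Submission
  imports Defs
begin

lemma ipow_nat: "ipow f (int n) = f ^^ n"
  by (simp add: ipow_def)

lemma ipow_nonpos: "j \<le> 0 \<Longrightarrow> ipow f j = inv f ^^ nat (- j)"
  by (cases "j = 0") (auto simp: ipow_def)

lemma ipow_zero: "ipow f 0 = id"
  by (simp add: ipow_def)

lemma ipow_one: "ipow f 1 = f"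
  by (simp add: ipow_def)

lemma ipow_succ:
  assumes "bij f" shows "ipow f (i+1) = ipow f i \<circ> f"
proof (cases "0 \<le> i")
  case True
  then have "nat (i+1) = Suc (nat i)" by simp
  with True show ?thesis by (simp add: ipow_def funpow_Suc_right del: funpow.simps)
next
  case False
  have gf: "inv f \<circ> f = id" using assms bij_is_inj inj_iff by blast
  have "nat (-i) = Suc (nat (-(i+1)))" using False by simp
  then have "ipow f i = (inv f ^^ nat (-(i+1))) \<circ> inv f"
    using False by (simp add: ipow_nonpos funpow_Suc_right del: funpow.simps)
  then have "ipow f i \<circ> f = inv f ^^ nat (-(i+1))" by (simp add: comp_assoc gf)
  also have "\<dots> = ipow f (i+1)" using False by (simp add: ipow_nonpos)
  finally show ?thesis by simp
qed

lemma ipow_pred: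
  assumes "bij f" shows "ipow f (i - 1) = ipow f i \<circ> inv f"
proof -
  have fg: "f \<circ> inv f = id" using assms bij_is_surj surj_iff by blast
  have "ipow f i = ipow f (i-1) \<circ> f" using ipow_succ[OF assms, of "i-1"] by simp
  then have "ipow f i \<circ> inv f = ipow f (i-1) \<circ> (f \<circ> inv f)" by (simp add: comp_assoc)
  then show ?thesis using fg by simp
qed

lemma ipow_add:
  assumes "bij f" shows "ipow f (i+j) = ipow f i \<circ> ipow f j"
proof (induct j rule: int_induct[where k=0])
  case base
  then show ?case by (simp add: ipow_zero)
next
  case (step1 j)
  have "ipow f (i + (j+1)) = ipow f (i + j) \<circ> f"
    using ipow_succ[OF assms, of "i+j"] by (simp add: add.assoc)
  then show ?case using step1 ipow_succ[OF assms, of j] by (simp add: comp_assoc)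
next
  case (step2 j)
  have "ipow f (i + (j-1)) = ipow f (i + j) \<circ> inv f"
    using ipow_pred[OF assms, of "i+j"] by (simp add: algebra_simps)
  then show ?case using step2 ipow_pred[OF assms, of j] by (simp add: comp_assoc)
qed

lemma ipow_cancel:
  assumes "bij f" shows "ipow f (- j) (ipow f j x) = x"
  using ipow_add[OF assms, of "-j" j] by (simp add: ipow_zero fun_eq_iff)

lemma ipow_cancel2:
  assumes "bij f" shows "ipow f j (ipow f (- j) x) = x"
  using ipow_add[OF assms, of j "-j"] by (simp add: ipow_zero fun_eq_iff)

lemma ipow_bij:
  assumes "bij f" shows "bij (ipow f j)"
proof -
  have "bij (inv f)" using assms bij_imp_bij_inv by blast
  then show ?thesis using assms bij_betw_funpow unfolding ipow_def by auto
qed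

lemma mono_inv_bij:
  fixes f :: "real \<Rightarrow> real"
  assumes "bij f" "mono f" shows "mono (inv f)"
proof (rule monoI, rule ccontr)
  fix x y :: real assume xy: "x \<le> y" and n: "\<not> inv f x \<le> inv f y"
  then have "f (inv f y) \<le> f (inv f x)" using assms(2) by (simp add: monoD)
  then have "y \<le> x" using assms(1) by (simp add: bij_is_surj surj_f_inv_f)
  then have "x = y" using xy by simp
  then show False using n by simp
qed

lemma ipow_mono:
  fixes f :: "real \<Rightarrow> real"
  assumes "bij f" "mono f" shows "mono (ipow f j)"
  using mono_pow[OF assms(2)] mono_pow[OF mono_inv_bij[OF assms]] unfolding ipow_def by auto

lemma hp_bij: "f \<in> homeo_plus \<Longrightarrow> bij f"
proof -
  assume "f \<in> homeo_plus"
  then have h: "\<And>x. inv f (f x) = x" "\<And>y. f (inv f y) = y"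
    unfolding homeo_plus_def homeomorphism_def by auto
  show "bij f" by (rule o_bij[of "inv f"]) (auto simp: fun_eq_iff h)
qed

lemma hp_mono: "f \<in> homeo_plus \<Longrightarrow> mono f"
  unfolding homeo_plus_def by simp

lemma mono_o: "mono (f::real\<Rightarrow>real) \<Longrightarrow> mono (g::real\<Rightarrow>real) \<Longrightarrow> mono (f \<circ> g)"
  by (simp add: mono_def)

definition TT :: "(real \<Rightarrow> real) \<Rightarrow> int \<Rightarrow> (real \<Rightarrow> real) \<Rightarrow> bool" where
  "TT V e g \<longleftrightarrow> (\<exists>h. mono h \<and> (\<forall>t. t \<le> h t) \<and> g = h \<circ> ipow V e)"

lemma TT_id: "TT V 0 id"
  unfolding TT_def by (rule exI[of _ id]) (auto simp: ipow_zero mono_def)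

lemma TT_V:
  assumes "bij V" "TT V e g" shows "TT V (e + j) (g \<circ> ipow V j)"
  using assms(2) unfolding TT_def by (auto simp: ipow_add[OF assms(1)] comp_assoc)

lemma TT_a:
  fixes a V :: "real \<Rightarrow> real"
  assumes V: "bij V" "mono V" and a: "mono a" "\<forall>t. a t > t" and T: "TT V e g"
  shows "TT V e (g \<circ> a)"
proof -
  obtain h where h: "mono h" "\<forall>t. t \<le> h t" "g = h \<circ> ipow V e" using T unfolding TT_def by blast
  define h' where "h' = h \<circ> (ipow V e \<circ> a \<circ> ipow V (-e))"
  have m: "mono h'" unfolding h'_def using h(1) a(1) ipow_mono[OF V]
    by (simp add: monoD monoI)
  have ge: "t \<le> h' t" for t
  proof -
    define s where "s = ipow V (-e) t"
    have "s \<le> a s" using a(2) less_imp_le by blast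
    then have "ipow V e s \<le> ipow V e (a s)" using ipow_mono[OF V] by (simp add: monoD)
    then have "t \<le> ipow V e (a s)" unfolding s_def using ipow_cancel2[OF V(1)] by simp
    also have "\<dots> \<le> h (ipow V e (a s))" using h(2) by simp
    finally show ?thesis unfolding h'_def s_def by simp
  qed
  have "g \<circ> a = h' \<circ> ipow V e"
    unfolding h'_def h(3) fun_eq_iff using ipow_cancel[OF V(1)] by simp
  then show ?thesis unfolding TT_def using m ge by blast
qed

theorem mainTheorem10:
  fixes \<omega> m k :: nat and a b :: "real \<Rightarrow> real"
  assumes "\<omega> \<ge> 3" and "1 \<le> k" and "k \<le> (\<omega> - 2) div 2"
    and "a \<in> homeo_plus" and "b \<in> homeo_plus"
    and "rel_holds \<omega> m k a b"
    and "\<forall>t. a t > t"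
  shows "\<forall>t. b t \<ge> t"
proof -
  have ba: "bij a" "mono a" and bb: "bij b" "mono b"
    using assms(4,5) hp_bij hp_mono by auto
  define n where "n = \<omega> - 2 * k"
  have n1: "int \<omega> - 2 * int k = int n" using assms(1,3) unfolding n_def by linarith
  have n2: "- int \<omega> + int k = - int (n + k)" using assms(1,3) unfolding n_def by linarith
  define c where "c = (b \<circ> a) ^^ k"
  define Y where "Y = ipow (b \<circ> a) (int k) \<circ> b \<circ> ipow a (-1) \<circ> ipow (a \<circ> b) (- int k)"
  define X where "X = ipow (b \<circ> a) (int k) \<circ> ipow b (int \<omega> - 2 * int k) \<circ> ipow Y (- int \<omega> + int k)"
  have R0: "ipow (b \<circ> a) (int k) \<circ> b = ipow X (int m) \<circ> ipow (a \<circ> b) (int k) \<circ> a"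
    using assms(6) unfolding rel_holds_def Let_def X_def Y_def by simp
  have R: "c (b x) = (X ^^ m) (((a \<circ> b) ^^ k) (a x))" for x
    using fun_cong[OF R0, of x] unfolding c_def ipow_nat by simp
  have bab: "bij (b \<circ> a)" "bij (a \<circ> b)" using ba bb bij_comp by blast+
  have bY: "bij Y" unfolding Y_def using ipow_bij bab ba bb bij_comp by metis
  have bX: "bij X" unfolding X_def using ipow_bij bab bY bb bij_comp by metis
  have mba: "mono (b \<circ> a)" "mono (a \<circ> b)" using ba bb by (auto simp: mono_o)
  have mY: "mono Y" unfolding Y_def
    using ipow_mono[OF bab(1) mba(1)] ipow_mono[OF bab(2) mba(2)] ipow_mono[OF ba] bb
    by (simp add: mono_o)
  have mX: "mono X" unfolding X_def
    using ipow_mono[OF bab(1) mba(1)] ipow_mono[OF bY mY] ipow_mono[OF bb]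
    by (simp add: mono_o)
  have comm: "((a \<circ> b) ^^ j) (a x) = a (((b \<circ> a) ^^ j) x)" for j x
    by (induct j) auto
  define Z where "Z = ((a \<circ> b) ^^ k) \<circ> a"
  have bZ: "bij Z" unfolding Z_def using bab ba bij_comp bij_betw_funpow by metis
  have YZ: "Y (Z x) = (X ^^ m) (Z x)" for x
  proof -
    have "Y (Z x) = c (b (ipow a (-1) (ipow (a \<circ> b) (- int k) (ipow (a \<circ> b) (int k) (a x)))))"
      unfolding Y_def Z_def c_def ipow_nat by simp
    also have "\<dots> = c (b (ipow a (-1) (ipow a 1 x)))"
      using ipow_cancel[OF bab(2)] ipow_cancel[OF ba(1), of 1] by (simp add: ipow_one)
    also have "\<dots> = c (b x)" using ipow_cancel[OF ba(1), of 1] by simp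
    finally show ?thesis using R unfolding Z_def by simp
  qed
  have YX: "Y = X ^^ m"
  proof
    fix y obtain x where "y = Z x" using bZ by (metis bij_pointE)
    then show "Y y = (X ^^ m) y" using YZ by simp
  qed
  define N where "N = Suc (m * (n + k))"
  have E2: "(X ^^ N) x = c ((b ^^ n) x)" for x
  proof -
    have XX: "X = c \<circ> (b ^^ n) \<circ> ipow Y (- int (n + k))"
      unfolding X_def n1 n2 c_def ipow_nat by simp
    have "(X ^^ N) x = X ((X ^^ (m * (n + k))) x)" unfolding N_def by simp
    also have "(X ^^ (m * (n + k))) = ipow Y (int (n + k))"
      unfolding YX ipow_nat funpow_mult by simp
    also have "X (ipow Y (int (n + k)) x) = c ((b ^^ n) (ipow Y (- int (n + k)) (ipow Y (int (n + k)) x)))"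
      by (simp add: XX)
    also have "\<dots> = c ((b ^^ n) x)" using ipow_cancel[OF bY, of "int (n + k)" x] by simp
    finally show ?thesis .
  qed
  have E1: "c (b x) = (X ^^ m) (a (c x))" for x
    using R comm unfolding c_def by simp
  have VNb: "(X ^^ N) (b x) = (X ^^ m) (a ((X ^^ N) x))" for x
  proof -
    have "(X ^^ N) (b x) = c (b ((b ^^ n) x))" using E2 by (simp add: funpow_swap1)
    also have "\<dots> = (X ^^ m) (a ((X ^^ N) x))" using E1 E2 by simp
    finally show ?thesis .
  qed
  have bform: "b = ipow X (- int N) \<circ> ipow X (int m) \<circ> a \<circ> ipow X (int N)"
  proof
    fix x
    have "b x = ipow X (- int N) (ipow X (int N) (b x))" using ipow_cancel[OF bX] by simp
    then show "b x = (ipow X (- int N) \<circ> ipow X (int m) \<circ> a \<circ> ipow X (int N)) x"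
      using VNb unfolding ipow_nat by simp
  qed
  have TTb: "TT X (e + int m) (g \<circ> b)" if "TT X e g" for e g
  proof -
    have "TT X (e + - int N) (g \<circ> ipow X (- int N))" using TT_V[OF bX that] .
    then have "TT X (e + - int N + int m) (g \<circ> ipow X (- int N) \<circ> ipow X (int m))"
      by (rule TT_V[OF bX])
    then have "TT X (e + - int N + int m) (g \<circ> ipow X (- int N) \<circ> ipow X (int m) \<circ> a)"
      by (rule TT_a[OF bX mX ba(2) assms(7)])
    then have F: "TT X (e + - int N + int m + int N) (g \<circ> ipow X (- int N) \<circ> ipow X (int m) \<circ> a \<circ> ipow X (int N))"
      by (rule TT_V[OF bX])
    have e1: "e + - int N + int m + int N = e + int m" by simp
    have e2: "g \<circ> ipow X (- int N) \<circ> ipow X (int m) \<circ> a \<circ> ipow X (int N) = g \<circ> b"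
      unfolding bform by (simp add: comp_assoc)
    show ?thesis using F unfolding e1 e2 .
  qed
  have L1: "TT X (e + int (j * m)) (g \<circ> (b \<circ> a) ^^ j)" if "TT X e g" for e g j
  proof (induct j)
    case 0 then show ?case using that by simp
  next
    case (Suc j)
    have "TT X (e + int (j * m) + int m) (g \<circ> (b \<circ> a) ^^ j \<circ> b)" using TTb[OF Suc] .
    then have "TT X (e + int (j * m) + int m) (g \<circ> (b \<circ> a) ^^ j \<circ> b \<circ> a)"
      using TT_a[OF bX mX ba(2) assms(7)] by blast
    moreover have "e + int (Suc j * m) = e + int (j * m) + int m" by simp
    moreover have "g \<circ> (b \<circ> a) ^^ Suc j = g \<circ> (b \<circ> a) ^^ j \<circ> b \<circ> a"
      by (simp only: funpow_Suc_right comp_assoc)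
    ultimately show ?case by metis
  qed
  have L2: "TT X (e + int (j * m)) (g \<circ> b ^^ j)" if "TT X e g" for e g j
  proof (induct j)
    case 0 then show ?case using that by simp
  next
    case (Suc j)
    have "TT X (e + int (j * m) + int m) (g \<circ> b ^^ j \<circ> b)" using TTb[OF Suc] .
    moreover have "e + int (Suc j * m) = e + int (j * m) + int m" by simp
    moreover have "g \<circ> b ^^ Suc j = g \<circ> b ^^ j \<circ> b"
      by (simp only: funpow_Suc_right comp_assoc)
    ultimately show ?case by metis
  qed
  have "TT X (0 + int (k * m) + int (n * m)) (id \<circ> (b \<circ> a) ^^ k \<circ> b ^^ n)"
    using L2[OF L1[OF TT_id]] by simp
  then have "TT X (int (m * (n + k))) (X ^^ N)"
  proof -
    have "X ^^ N = (b \<circ> a) ^^ k \<circ> b ^^ n" using E2 unfolding c_def by (simp add: fun_eq_iff)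
    moreover have "int (m * (n + k)) = 0 + int (k * m) + int (n * m)" by (simp add: algebra_simps)
    ultimately show ?thesis using \<open>TT X (0 + int (k * m) + int (n * m)) (id \<circ> (b \<circ> a) ^^ k \<circ> b ^^ n)\<close>
      by simp
  qed
  then obtain h where h: "\<forall>t. t \<le> h t" "X ^^ N = h \<circ> ipow X (int (m * (n + k)))"
    unfolding TT_def by blast
  have Xge: "t \<le> X t" for t
  proof -
    have "ipow X (int N) = ipow X 1 \<circ> ipow X (int (m * (n + k)))"
      using ipow_add[OF bX, of 1 "int (m * (n + k))"] unfolding N_def by simp
    then have "X (ipow X (int (m * (n + k))) y) = h (ipow X (int (m * (n + k))) y)" for y
      using h(2) unfolding ipow_nat ipow_one by (metis comp_apply)
    then have "X t = h t" using ipow_cancel2[OF bX, of "int (m * (n + k))" t] by metis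
    then show ?thesis using h(1) by simp
  qed
  have Xmge: "t \<le> (X ^^ j) t" for t j
  proof (induct j)
    case 0 then show ?case by simp
  next
    case (Suc j) then show ?case using Xge[of "(X ^^ j) t"] by simp
  qed
  have mc: "mono c" unfolding c_def using mono_pow mba(1) by blast
  show ?thesis
  proof (intro allI, rule ccontr)
    fix t assume "\<not> t \<le> b t"
    then have "c (b t) \<le> c t" using mc by (simp add: monoD)
    moreover have "c t < a (c t)" using assms(7) by simp
    moreover have "a (c t) \<le> c (b t)" using E1 Xmge by simp
    ultimately show False by simp
  qed
qed

end
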